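(* Assume $\sigma_1(x)=\tfrac12\sigma_1''(0)(x-a_1)(x-b_1)$ and $\sigma_2(x)=\tfrac12\sigma_2''(0)(x-a_2)(x-b_2)$ with $\sigma_1''(0)\ne0$, $\sigma_2''(0)\ne0$ and real zeros satisfying $0<a_1<a_2<b_1<b_2$, and assume $0<q^2\Lambda_q<1$, where $\Lambda_q=q^{-2}\Big[1+\frac{(1-q^{-1})\tau'(0)}{\frac12\sigma_1''(0)}\Big]$. Put $a=a_2$, $b=q^{-1}b_1$, and suppose $q^{-N-1}a=b$ for some $N\in\mathbb{N}_0$. Let $$\rho(x)=|x|^{\iota}\frac{(qa/x,\,x/b;q)_\infty}{(a_1/x,\,x/b_2;q)_\infty},\qquad q^{\iota}=\frac{q^{-3}\sigma_2''(0)b_2}{\sigma_1''(0)b}.$$ Then there exist polynomials $P_0,\dots,P_N$, with $P_n$ of degree $n$ a solution of the q-EHT with $\lambda=\lambda_n$, and nonzero constants $d_n^2$, such that for $m,n\in\{0,\dots,N\}$ $$\int_a^{b}P_n(x)P_m(x)\rho(x)\,d_{q^{-1}}x=d_n^2\delta_{mn},$$ i.e. orthogonality with respect to $\rho$ supported on $\{q^{-k}a\}_{k=0}^N$.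
   Context: Throughout $0<q<1$. For a function $y$ and $\zeta\in\{q,q^{-1}\}$, $D_\zeta y(x)=\frac{y(x)-y(\zeta x)}{(1-\zeta)x}$ for $x\ne0$ and $D_\zeta y(0)=y'(0)$; $[n]_q=\frac{1-q^n}{1-q}$. Let $\sigma_1$ be a real polynomial of degree at most two, $\tau(x)=\tau'(0)x+\tau(0)$ a real polynomial with $\tau'(0)\ne0$, and $\sigma_2(x):=q[\sigma_1(x)+(1-q^{-1})x\tau(x)]$. The q-EHT with parameter $n$ is $\sigma_1(x)D_{q^{-1}}D_qy(x)+\tau(x)D_qy(x)+\lambda_ny(x)=0$, $\lambda_n=-[n]_q\big(\tau'(0)+\tfrac12[n-1]_{q^{-1}}\sigma_1''(0)\big)$. $(\alpha;q)_\infty=\prod_{k\ge0}(1-\alpha q^k)$, $(\alpha_1,\dots,\alpha_r;q)_\infty=\prod_i(\alpha_i;q)_\infty$. For $q^{\iota}=c$ ($c\ne0$), $\iota$ is any complex number with $e^{\iota\ln q}=c$ and $|x|^{\iota}:=e^{\iota\ln|x|}$. For $a>0$ and $b=q^{-N-1}a$, $\int_a^{b}f(x)\,d_{q^{-1}}x=(q^{-1}-1)a\sum_{k=0}^{N}q^{-k}f(q^{-k}a)$. *)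

theory Defs
  imports "HOL-Analysis.Analysis" "HOL-Computational_Algebra.Polynomial"
begin

definition qD :: "real \<Rightarrow> (real \<Rightarrow> real) \<Rightarrow> real \<Rightarrow> real" where
  "qD \<zeta> y x = (if x = 0 then deriv y 0 else (y x - y (\<zeta> * x)) / ((1 - \<zeta>) * x))"

definition qnum :: "real \<Rightarrow> int \<Rightarrow> real" where
  "qnum q n = (1 - q powi n) / (1 - q)"

definition qpoch_inf :: "real \<Rightarrow> real \<Rightarrow> real" where
  "qpoch_inf \<alpha> q = (\<Prod>k. 1 - \<alpha> * q ^ k)"

definition qEHT_lambda :: "real \<Rightarrow> real poly \<Rightarrow> real poly \<Rightarrow> nat \<Rightarrow> real" where
  "qEHT_lambda q \<sigma>1 \<tau> n =
     - qnum q (int n) * (coeff \<tau> 1 + 1/2 * qnum (1/q) (int n - 1) * poly (pderiv (pderiv \<sigma>1)) 0)"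

definition solves_qEHT :: "real \<Rightarrow> real poly \<Rightarrow> real poly \<Rightarrow> real \<Rightarrow> (real \<Rightarrow> real) \<Rightarrow> bool" where
  "solves_qEHT q \<sigma>1 \<tau> lam y \<longleftrightarrow>
     (\<forall>x. poly \<sigma>1 x * qD (1/q) (qD q y) x + poly \<tau> x * qD q y x + lam * y x = 0)"

text \<open>Jackson-type q^{-1}-integral from a to b = q^{-N-1} a.\<close>
definition qinv_integral :: "real \<Rightarrow> real \<Rightarrow> nat \<Rightarrow> (real \<Rightarrow> complex) \<Rightarrow> complex" where
  "qinv_integral q a N f =
     complex_of_real ((1/q - 1) * a) * (\<Sum>k = 0..N. complex_of_real ((1/q) ^ k) * f ((1/q) ^ k * a))"

end

theory Submission
  imports Defs
begin

lemma qpoch_conv: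
  fixes q :: real assumes "0 < q" "q < 1"
  shows "convergent_prod (\<lambda>k. 1 - \<alpha> * q ^ k)"
proof -
  have "summable (\<lambda>k. norm ((1 - \<alpha> * q ^ k) - 1))"
    using assms by (simp add: abs_mult power_abs summable_geometric)
  then show ?thesis
    by (intro abs_convergent_prod_imp_convergent_prod summable_imp_abs_convergent_prod)
qed

lemma qpoch_step:
  fixes q :: real assumes "0 < q" "q < 1"
  shows "qpoch_inf \<alpha> q = (1 - \<alpha>) * qpoch_inf (\<alpha> * q) q"
proof -
  have "(\<lambda>k. 1 - \<alpha> * q ^ k) has_prod ((\<Prod>k<1. 1 - \<alpha> * q ^ k) * (\<Prod>k. 1 - \<alpha> * q ^ (k + 1)))"
    by (rule has_prod_ignore_initial_segment'[OF qpoch_conv[OF assms]])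
  then show ?thesis unfolding qpoch_inf_def
    by (simp add: has_prod_iff mult.assoc mult.commute)
qed

lemma qpoch_pos:
  fixes q :: real assumes "0 < q" "q < 1" "\<alpha> < 1"
  shows "qpoch_inf \<alpha> q \<noteq> 0"
  unfolding qpoch_inf_def
proof (rule prodinf_nonzero[OF qpoch_conv[OF assms(1,2)]])
  fix i
  show "1 - \<alpha> * q ^ i \<noteq> 0"
  proof (cases "\<alpha> \<le> 0")
    case True then show ?thesis using assms
      by (smt (verit) mult_nonpos_nonneg zero_le_power)
  next
    case False
    have "q ^ i \<le> 1" using assms by (simp add: power_le_one)
    then have "\<alpha> * q ^ i \<le> \<alpha>" using False by (simp add: mult_left_le)
    then show ?thesis using assms by simp
  qed
qed

definition qdp :: "real \<Rightarrow> real poly \<Rightarrow> real poly" where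
  "qdp z p = (\<Sum>k\<le>degree p. monom (coeff p (Suc k) * qnum z (int (Suc k))) k)"

lemma coeff_qdp: "coeff (qdp z p) j = coeff p (Suc j) * qnum z (int (Suc j))"
proof (cases "j \<le> degree p")
  case True then show ?thesis by (simp add: qdp_def coeff_sum coeff_monom)
next
  case False then have "coeff p (Suc j) = 0" by (simp add: coeff_eq_0)
  then show ?thesis using False by (simp add: qdp_def coeff_sum coeff_monom)
qed

lemma qnum_nat: "z \<noteq> 1 \<Longrightarrow> qnum z (int n) = (1 - z ^ n) / (1 - z)"
  by (simp add: qnum_def power_int_of_nat)

lemma poly_qdp_nz:
  assumes z: "z \<noteq> 1" and x: "x \<noteq> 0"
  shows "(poly p x - poly p (z * x)) / ((1 - z) * x) = poly (qdp z p) x"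
proof -
  let ?d = "degree p"
  have "poly p x - poly p (z * x) = (\<Sum>i\<le>?d. coeff p i * x ^ i * (1 - z ^ i))"
    by (simp add: poly_altdef sum_subtractf[symmetric] algebra_simps power_mult_distrib)
  also have "\<dots> = (\<Sum>i\<le>Suc ?d. coeff p i * x ^ i * (1 - z ^ i))"
    by (simp add: coeff_eq_0)
  also have "\<dots> = (\<Sum>k\<le>?d. coeff p (Suc k) * x ^ Suc k * (1 - z ^ Suc k))"
    by (subst sum.atMost_Suc_shift) simp
  also have "\<dots> = (1 - z) * x * (\<Sum>k\<le>?d. coeff p (Suc k) * qnum z (int (Suc k)) * x ^ k)"
    unfolding sum_distrib_left
  proof (rule sum.cong[OF refl])
    fix k
    show "coeff p (Suc k) * x ^ Suc k * (1 - z ^ Suc k) = (1 - z) * x * (coeff p (Suc k) * qnum z (int (Suc k)) * x ^ k)"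
      using z by (simp only: qnum_nat[OF z]) (simp add: field_simps)
  qed
  also have "(\<Sum>k\<le>?d. coeff p (Suc k) * qnum z (int (Suc k)) * x ^ k) = poly (qdp z p) x"
    by (simp add: qdp_def poly_sum poly_monom)
  finally show ?thesis using z x by (simp add: field_simps)
qed

lemma qD_poly:
  assumes z: "z \<noteq> 1"
  shows "qD z (poly p) = poly (qdp z p)"
proof
  fix x
  show "qD z (poly p) x = poly (qdp z p) x"
  proof (cases "x = 0")
    case True
    have "deriv (poly p) 0 = poly (pderiv p) 0" by (simp add: poly_DERIV DERIV_imp_deriv)
    also have "\<dots> = coeff p 1" by (simp add: poly_0_coeff_0 coeff_pderiv)
    also have "\<dots> = poly (qdp z p) 0" using z by (simp add: poly_0_coeff_0 coeff_qdp qnum_def)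
    finally show ?thesis using True by (simp add: qD_def)
  next
    case False then show ?thesis using poly_qdp_nz[OF z False] by (simp add: qD_def)
  qed
qed
definition Lop :: "real \<Rightarrow> real poly \<Rightarrow> real poly \<Rightarrow> real poly \<Rightarrow> real poly" where
  "Lop q s t p = s * qdp (1/q) (qdp q p) + t * qdp q p"

lemma coeff_Lop:
  assumes hi: "\<And>i. i > j \<Longrightarrow> coeff p i = 0"
  shows "coeff (Lop q [:c0, c1, c2:] [:t0, t1:] p) j
          = qnum q (int j) * (t1 + c2 * qnum (1/q) (int j - 1)) * coeff p j"
proof -
  have h1: "coeff p (Suc j) = 0" "coeff p (Suc (Suc j)) = 0" "coeff p (Suc (Suc (Suc j))) = 0"
    using hi by auto
  show ?thesis
  proof (cases j)
    case 0 then show ?thesis using h1 by (simp add: Lop_def coeff_qdp qnum_def)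
  next
    case (Suc i)
    show ?thesis
    proof (cases i)
      case 0 then show ?thesis using h1 Suc by (simp add: Lop_def coeff_qdp qnum_def)
    next
      case (Suc k)
      then show ?thesis using h1 \<open>j = Suc i\<close> by (simp add: Lop_def coeff_qdp algebra_simps)
    qed
  qed
qed
lemma qdp_add: "qdp z (p + r) = qdp z p + qdp z r"
  by (rule poly_eqI) (simp add: coeff_qdp algebra_simps)
lemma qdp_smult: "qdp z (smult c p) = smult c (qdp z p)"
  by (rule poly_eqI) (simp add: coeff_qdp algebra_simps)
lemma Lop_add: "Lop q s t (p + r) = Lop q s t p + Lop q s t r"
  by (simp add: Lop_def qdp_add algebra_simps)
lemma Lop_smult: "Lop q s t (smult c p) = smult c (Lop q s t p)"
  by (simp add: Lop_def qdp_smult smult_add_right)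

lemma eigen_exists:
  fixes T :: "real poly \<Rightarrow> real poly" and \<mu> :: "nat \<Rightarrow> real"
  assumes add: "\<And>p r. T (p + r) = T p + T r"
    and sm: "\<And>c p. T (smult c p) = smult c (T p)"
    and co: "\<And>p j. (\<And>i. i > j \<Longrightarrow> coeff p i = 0) \<Longrightarrow> coeff (T p) j = \<mu> j * coeff p j"
    and dist: "\<And>j. j < n \<Longrightarrow> \<mu> j \<noteq> \<mu> n"
  shows "\<exists>P. degree P = n \<and> coeff P n = 1 \<and> T P = smult (\<mu> n) P"
proof -
  have T0: "T 0 = 0" using sm[of 0 0] by simp
  have claim: "\<forall>r. (\<forall>i\<ge>m. coeff r i = 0) \<longrightarrow> (\<exists>p. (\<forall>i\<ge>m. coeff p i = 0) \<and> T p - smult (\<mu> n) p = r)"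
    if "m \<le> n" for m
    using that
  proof (induction m)
    case 0
    show ?case
    proof (intro allI impI)
      fix r :: "real poly" assume "\<forall>i\<ge>0. coeff r i = 0"
      then have "r = 0" by (intro poly_eqI) simp
      then show "\<exists>p. (\<forall>i\<ge>0. coeff p i = 0) \<and> T p - smult (\<mu> n) p = r"
        by (intro exI[of _ 0]) (simp add: T0)
    qed
  next
    case (Suc m)
    then have mn: "m < n" by simp
    show ?case
    proof (intro allI impI)
      fix r :: "real poly" assume r: "\<forall>i\<ge>Suc m. coeff r i = 0"
      define c where "c = coeff r m / (\<mu> m - \<mu> n)"
      define p0 where "p0 = monom c m"
      define r' where "r' = r - (T p0 - smult (\<mu> n) p0)"
      have cp0: "coeff (T p0) i = \<mu> i * coeff p0 i" if "i \<ge> m" for i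
        by (rule co) (use that in \<open>auto simp: p0_def coeff_monom\<close>)
      have "\<forall>i\<ge>m. coeff r' i = 0"
      proof (intro allI impI)
        fix i assume "m \<le> i"
        show "coeff r' i = 0"
        proof (cases "i = m")
          case True
          have "\<mu> m - \<mu> n \<noteq> 0" using dist[OF mn] by simp
          then show ?thesis using True cp0[of m]
            by (simp add: r'_def p0_def c_def field_simps)
        next
          case False
          then show ?thesis using cp0[of i] \<open>m \<le> i\<close> r
            by (simp add: r'_def p0_def coeff_monom)
        qed
      qed
      then obtain p' where p': "\<forall>i\<ge>m. coeff p' i = 0" "T p' - smult (\<mu> n) p' = r'"
        using Suc.IH mn by auto
      show "\<exists>p. (\<forall>i\<ge>Suc m. coeff p i = 0) \<and> T p - smult (\<mu> n) p = r"
      proof (intro exI[of _ "p0 + p'"] conjI allI impI)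
        fix i assume "Suc m \<le> i" then show "coeff (p0 + p') i = 0"
          using p'(1) by (simp add: p0_def coeff_monom)
      next
        show "T (p0 + p') - smult (\<mu> n) (p0 + p') = r"
          using p'(2) by (simp add: add r'_def smult_add_right algebra_simps)
      qed
    qed
  qed
  define r where "r = - (T (monom 1 n) - smult (\<mu> n) (monom 1 n))"
  have cT: "coeff (T (monom 1 n)) i = \<mu> i * coeff (monom 1 n) i" if "i \<ge> n" for i
    by (rule co) (use that in \<open>auto simp: coeff_monom\<close>)
  have "\<forall>i\<ge>n. coeff r i = 0"
    using cT by (auto simp: r_def coeff_monom)
  then obtain p where p: "\<forall>i\<ge>n. coeff p i = 0" "T p - smult (\<mu> n) p = r"
    using claim[of n] by auto
  define P where "P = monom 1 n + p"
  have cPn: "coeff P n = 1" using p(1) by (simp add: P_def)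
  have "degree P \<le> n"
    by (rule degree_le) (use p(1) in \<open>auto simp: P_def coeff_monom\<close>)
  moreover have "degree P \<ge> n" using cPn by (metis le_degree one_neq_zero)
  moreover have "T P = smult (\<mu> n) P"
  proof -
    have "T P - smult (\<mu> n) P = (T (monom 1 n) - smult (\<mu> n) (monom 1 n)) + (T p - smult (\<mu> n) p)"
      by (simp add: P_def add smult_add_right algebra_simps)
    also have "\<dots> = 0" using p(2) by (simp add: r_def)
    finally show ?thesis by simp
  qed
  ultimately show ?thesis using cPn by (intro exI[of _ P]) auto
qed
lemma sum_by_parts_sym:
  fixes w Ap Am F G :: "nat \<Rightarrow> complex" and f0 :: complex
  assumes Am0: "Am 0 = 0" and ApN: "Ap N = 0"
    and W: "\<And>k. k < N \<Longrightarrow> w k * Ap k = w (Suc k) * Am (Suc k)"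
  shows "(\<Sum>k\<le>N. w k * ((Ap k * (F (Suc k) - F k) + Am k * ((if k = 0 then f0 else F (k - 1)) - F k)) * G k))
       = - (\<Sum>k<N. w k * Ap k * (F (Suc k) - F k) * (G (Suc k) - G k))"
proof -
  have s1: "(\<Sum>k\<le>N. w k * (Ap k * (F (Suc k) - F k)) * G k) = (\<Sum>k<N. w k * Ap k * (F (Suc k) - F k) * G k)"
    by (simp add: lessThan_Suc_atMost[symmetric] ApN mult.assoc)
  have s2: "(\<Sum>k\<le>N. w k * (Am k * ((if k = 0 then f0 else F (k - 1)) - F k)) * G k)
      = (\<Sum>k<N. w k * Ap k * (F k - F (Suc k)) * G (Suc k))"
    unfolding lessThan_Suc_atMost[symmetric] sum.lessThan_Suc_shift
    using W by (simp add: Am0 mult.assoc)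
  have "(\<Sum>k\<le>N. w k * ((Ap k * (F (Suc k) - F k) + Am k * ((if k = 0 then f0 else F (k - 1)) - F k)) * G k))
      = (\<Sum>k\<le>N. w k * (Ap k * (F (Suc k) - F k)) * G k) + (\<Sum>k\<le>N. w k * (Am k * ((if k = 0 then f0 else F (k - 1)) - F k)) * G k)"
    by (simp add: sum.distrib[symmetric] algebra_simps)
  also have "\<dots> = (\<Sum>k<N. w k * Ap k * (F (Suc k) - F k) * G k + w k * Ap k * (F k - F (Suc k)) * G (Suc k))"
    by (simp add: s1 s2 sum.distrib)
  also have "\<dots> = - (\<Sum>k<N. w k * Ap k * (F (Suc k) - F k) * (G (Suc k) - G k))"
    by (simp add: sum_negf[symmetric] algebra_simps)
  finally show ?thesis .
qed
lemma L_alg: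
  fixes A B C q d x sv tv :: real
  assumes nz: "q \<noteq> 0" "d \<noteq> 0" "x \<noteq> 0" and d: "1 - 1/q = - d / q"
  shows "sv * (((A - B)/(d*x) - (C - A)/(d*(1/q*x))) / ((1 - 1/q)*x)) + tv*((A-B)/(d*x))
     = q^2 * sv/(d^2*x^2)*(C - A) + q * (sv + (1-1/q)*x*tv)/(d^2*x^2)*(B - A)"
  unfolding d using nz by (simp add: field_simps power2_eq_square)

lemma L_pointwise:
  fixes q x sv tv :: real and y :: "real \<Rightarrow> real"
  assumes q: "0 < q" "q < 1" and x: "x \<noteq> 0"
  shows "sv * qD (1/q) (qD q y) x + tv * qD q y x
       = q^2 * sv / ((1-q)^2 * x^2) * (y ((1/q)^1 * x) - y x)
         + q * (sv + (1 - 1/q) * x * tv) / ((1-q)^2 * x^2) * (y (q * x) - y x)"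
proof -
  have e: "q * (1 / q * x) = x" using q by simp
  have nz: "1/q*x \<noteq> 0" "q \<noteq> 0" "1 - q \<noteq> 0" using q x by auto
  have d: "1 - 1/q = - (1-q) / q" using q by (simp add: field_simps)
  have "sv * qD (1/q) (qD q y) x + tv * qD q y x
      = sv * (((y x - y (q*x)) / ((1-q)*x) - (y (1/q*x) - y x) / ((1-q)*(1/q*x))) / ((1 - 1/q) * x))
        + tv * ((y x - y (q*x)) / ((1-q)*x))"
    using nz x by (simp add: qD_def e)
  also have "\<dots> = q^2 * sv / ((1-q)^2 * x^2) * (y ((1/q)^1 * x) - y x)
         + q * (sv + (1 - 1/q) * x * tv) / ((1-q)^2 * x^2) * (y (q * x) - y x)"
    using L_alg[OF nz(2,3) x d] by simp
  finally show ?thesis .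
qed
lemma W_alg:
  fixes U V W Z x q a a1 b b2 s1 s2 :: real
  assumes nz: "q \<noteq> 0" "x \<noteq> 0" "b \<noteq> 0" "b2 \<noteq> 0" "s1 \<noteq> 0" "s2 \<noteq> 0" "W \<noteq> 0" "Z \<noteq> 0"
     "x - a1 \<noteq> 0" "q*b2 - x \<noteq> 0"
  shows "((1 - q*a/x)*U*V/((1-a1/x)*W*Z)) * ((s1/2)*(x-a1)*(x-q*b))
     = (1/q) * (U*(1-(x/q)/b)*V/(W*(1-(x/q)/b2)*Z)) * ((s2/2)*(x/q-a)*(x/q-b2)) / ((1/q)^3 * s2 * b2/(s1 * b))"
proof -
  have e1: "1 - a1/x = (x - a1)/x" "1-(x/q)/b2 = (q*b2 - x)/(q*b2)" "1 - q*a/x = (x - q*a)/x"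
     "1-(x/q)/b = (q*b - x)/(q*b)" "x/q-b2 = - (q*b2 - x)/q" "x/q - a = (x - q*a)/q"
    using nz by (auto simp: field_simps)
  have "((1 - q*a/x)*U*V/((1-a1/x)*W*Z)) * ((s1/2)*(x-a1)*(x-q*b)) = U*V/(W*Z)*(s1/2)*(x-q*a)*(x-q*b)"
    unfolding e1 using nz by (simp add: field_simps)
  moreover have "(1/q) * (U*(1-(x/q)/b)*V/(W*(1-(x/q)/b2)*Z)) * ((s2/2)*(x/q-a)*(x/q-b2)) / ((1/q)^3 * s2 * b2/(s1 * b))
     = U*V/(W*Z)*(s1/2)*(x-q*a)*(x-q*b)"
    unfolding e1 using nz by (simp add: field_simps power3_eq_cube)
  ultimately show ?thesis by simp
qed
lemma R1:
  fixes q x a a1 b b2 s1 s2 :: real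
  defines "Q \<equiv> (\<lambda>x. qpoch_inf (q * a / x) q * qpoch_inf (x / b) q / (qpoch_inf (a1 / x) q * qpoch_inf (x / b2) q))"
  assumes q: "0 < q" "q < 1" and x: "0 < x" "a1 < x" "x < q * b2" and pos: "0 < a1" "0 < b" "0 < b2"
    and s: "s1 \<noteq> 0" "s2 \<noteq> 0"
  shows "Q x * ((s1/2)*(x-a1)*(x-q*b))
     = (1/q) * Q (x/q) * ((s2/2)*(x/q-a)*(x/q-b2)) / ((1/q)^3 * s2 * b2/(s1 * b))"
proof -
  define U where "U = qpoch_inf (q*a/x*q) q"
  define V where "V = qpoch_inf (x/b) q"
  define W where "W = qpoch_inf (a1/x*q) q"
  define Z where "Z = qpoch_inf (x/b2) q"
  have e: "q * a / (x/q) = q*a/x*q" "x / q / b * q = x/b" "a1/(x/q) = a1/x*q" "x/q/b2*q = x/b2"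
    using q x by (auto simp: field_simps)
  have Qx: "Q x = (1 - q*a/x)*U*V/((1-a1/x)*W*Z)"
    unfolding Q_def U_def V_def W_def Z_def
    by (subst (1 2) qpoch_step[OF q]) (simp add: mult.assoc)
  have Qx': "Q (x/q) = U*(1-(x/q)/b)*V/(W*(1-(x/q)/b2)*Z)"
    unfolding Q_def U_def V_def W_def Z_def
    apply (subst (2) qpoch_step[OF q])
    apply (subst (4) qpoch_step[OF q])
    apply (simp only: e)
    done
  have "a1 / x < 1" using x pos by simp
  then have "a1/x*q < 1" using q pos x
    by (smt (verit, best) divide_pos_pos mult_less_cancel_left1 mult_pos_pos)
  then have W0: "W \<noteq> 0" unfolding W_def by (rule qpoch_pos[OF q])
  have "x / b2 < 1" using x q pos by (smt (verit) divide_less_eq_1_pos mult_less_cancel_right1)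
  then have Z0: "Z \<noteq> 0" unfolding Z_def by (rule qpoch_pos[OF q])
  show ?thesis unfolding Qx Qx'
    by (rule W_alg) (use q x pos s W0 Z0 in auto)
qed
lemma lam_alg:
  fixes A B d q u r t1 :: real
  assumes nz: "q \<noteq> 0" "d \<noteq> 0" "u \<noteq> 0" and t1: "t1 = (r - 1) * u / (-d/q)"
  shows "- ((1-A)/d) * (t1 + u*((1-B)/(-d/q))) = - u * q * ((1-A)*(B - r)) / d^2"
  unfolding t1 using nz by (simp add: field_simps power2_eq_square)

lemma lam_closed:
  fixes q r u t1 :: real
  assumes q: "0 < q" "q < 1" and u: "u \<noteq> 0" and r: "r = 1 + (1-1/q)*t1/u"
  shows "- qnum q (int n) * (t1 + u * qnum (1/q) (int n - 1)) = - u * q * ((1-q^n)*((1/q)^n*q - r)) / (1-q)^2"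
proof (cases n)
  case 0 then show ?thesis by (simp add: qnum_def)
next
  case (Suc m)
  have e: "int n - 1 = int m" using Suc by simp
  have nz: "q \<noteq> 0" "1 - q \<noteq> 0" "1 - 1/q \<noteq> 0" using q by auto
  have t1: "t1 = (r - 1) * u / (1 - 1/q)" using r nz u by (simp add: field_simps)
  have d: "1 - 1/q = -(1-q)/q" using nz by (simp add: field_simps)
  have p: "(1/q)^n * q = (1/q)^m" using Suc nz by simp
  have q1: "qnum q (int n) = (1-q^n)/(1-q)" "qnum (1/q) (int m) = (1-(1/q)^m)/(-(1-q)/q)"
    using d by (simp_all add: qnum_def power_int_of_nat)
  have t1': "t1 = (r - 1) * u / (-(1-q)/q)" using t1 d by simp
  show ?thesis unfolding e p q1
    by (rule lam_alg[where A="q^n" and B="(1/q)^m" and d="1-q" and r=r and u=u and q=q])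
       (use nz u t1' in auto)
qed

lemma G_mono:
  fixes q r :: real
  assumes q: "0 < q" "q < 1" and r: "0 < r" "r < 1"
  shows "strict_mono (\<lambda>n. (1-q^n)*((1/q)^n*q - r))"
proof (rule strict_monoI_Suc)
  fix n
  have P: "(1/q)^n \<ge> 1" using q by (simp add: one_le_power)
  have Qn: "q^n \<le> 1" "0 \<le> q^n" using q by (auto simp: power_le_one)
  have prod: "(1/q)^n * q^n = 1" using q by (simp add: power_mult_distrib[symmetric])
  have "r * q^n < 1" using Qn r by (smt (verit) mult_left_le)
  then have "(1/q)^n - r * q^n > 0" using P by linarith
  then have pos: "(1-q) * ((1/q)^n - r * q^n) > 0" using q by simp
  have "(1-q^Suc n)*((1/q)^Suc n*q - r) - (1-q^n)*((1/q)^n*q - r) = (1-q) * ((1/q)^n - r * q^n)"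
    using prod q by (simp add: algebra_simps)
  then show "(1-q^n)*((1/q)^n*q - r) < (1-q^Suc n)*((1/q)^Suc n*q - r)" using pos by linarith
qed

lemma solves_from_Lop:
  assumes q: "0 < q" "q < 1" and L: "Lop q s t P = smult (- lam) P"
  shows "solves_qEHT q s t lam (poly P)"
  unfolding solves_qEHT_def
proof
  fix x
  have q1: "q \<noteq> 1" "1/q \<noteq> 1" using q by auto
  have "poly (Lop q s t P) x = - lam * poly P x" using L by simp
  then show "poly s x * qD (1/q) (qD q (poly P)) x + poly t x * qD q (poly P) x + lam * poly P x = 0"
    by (simp add: qD_poly[OF q1(1)] qD_poly[OF q1(2)] Lop_def)
qed

lemma span_zero:
  fixes P :: "nat \<Rightarrow> real poly" and ip :: "real poly \<Rightarrow> complex"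
  assumes add: "\<And>g h. ip (g + h) = ip g + ip h" and sm: "\<And>c g. ip (smult c g) = of_real c * ip g"
    and P: "\<And>m. m \<le> N \<Longrightarrow> degree (P m) = m \<and> P m \<noteq> 0"
    and z: "\<And>m. m \<le> N \<Longrightarrow> ip (P m) = 0"
  shows "d \<le> N \<Longrightarrow> degree g \<le> d \<Longrightarrow> ip g = 0"
proof (induction d arbitrary: g)
  case 0
  then have "degree (P 0) = 0" "P 0 \<noteq> 0" using P by auto
  then have c0: "coeff (P 0) 0 \<noteq> 0" by (metis leading_coeff_0_iff)
  have g0: "g = [:coeff g 0:]" using 0 by (metis degree_0_id le_zero_eq)
  have p0: "P 0 = [:coeff (P 0) 0:]" using \<open>degree (P 0) = 0\<close> by (metis degree_0_id)
  have "g = smult (coeff g 0 / coeff (P 0) 0) (P 0)"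
    using c0 by (subst g0, subst p0) simp
  then have "ip g = of_real (coeff g 0 / coeff (P 0) 0) * ip (P 0)" using sm by metis
  then show ?case using z[of 0] by simp
next
  case (Suc d)
  have Pd: "degree (P (Suc d)) = Suc d" "P (Suc d) \<noteq> 0" using P Suc.prems by auto
  then have lc: "coeff (P (Suc d)) (Suc d) \<noteq> 0" by (metis leading_coeff_0_iff)
  define h where "h = g - smult (coeff g (Suc d) / coeff (P (Suc d)) (Suc d)) (P (Suc d))"
  have "degree h \<le> d"
  proof (rule degree_le, intro allI impI)
    fix i assume "d < i"
    show "coeff h i = 0"
    proof (cases "i = Suc d")
      case True then show ?thesis using lc by (simp add: h_def)
    next
      case False then have "i > Suc d" using \<open>d < i\<close> by simp
      then show ?thesis using Suc.prems Pd by (simp add: h_def coeff_eq_0)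
    qed
  qed
  then have "ip h = 0" using Suc.IH Suc.prems by simp
  moreover have "g = h + smult (coeff g (Suc d) / coeff (P (Suc d)) (Suc d)) (P (Suc d))"
    by (simp add: h_def)
  ultimately have "ip g = ip h + of_real (coeff g (Suc d) / coeff (P (Suc d)) (Suc d)) * ip (P (Suc d))"
    using add sm by metis
  then show ?case using z[of "Suc d"] Suc.prems \<open>ip h = 0\<close> by simp
qed
lemma W_real:
  fixes pk QX QX' S1 S2 C q D X :: real
  assumes nz: "q \<noteq> 0" "C \<noteq> 0" "D \<noteq> 0" "X \<noteq> 0" and h: "QX * S1 = (1/q)*QX'*S2/C"
  shows "pk * QX * (q^2 * S1 / (D * X^2)) = pk * (1/q) / C * QX' * (S2 / (D * (X/q)^2))"
proof -
  have "pk * QX * (q^2 * S1 / (D * X^2)) = pk * (q^2 / (D * X^2)) * (QX * S1)" by (simp add: field_simps)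
  also have "\<dots> = pk * (q^2 / (D * X^2)) * ((1/q)*QX'*S2/C)" by (simp add: h)
  also have "\<dots> = pk * (1/q) / C * QX' * (S2 / (D * (X/q)^2))"
    using nz by (simp add: field_simps power2_eq_square)
  finally show ?thesis .
qed

lemma E_step:
  fixes \<iota> :: complex and q x C :: real
  assumes "0 < q" "0 < x" and i: "exp (\<iota> * complex_of_real (ln q)) = complex_of_real C"
  shows "exp (\<iota> * complex_of_real (ln \<bar>x/q\<bar>)) = exp (\<iota> * complex_of_real (ln \<bar>x\<bar>)) / complex_of_real C"
proof -
  have "ln \<bar>x/q\<bar> = ln x - ln q" using assms by (simp add: ln_divide_pos)
  then have "exp (\<iota> * complex_of_real (ln \<bar>x/q\<bar>)) = exp (\<iota> * complex_of_real (ln x) - \<iota> * complex_of_real (ln q))"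
    by (simp only: of_real_diff right_diff_distrib)
  also have "\<dots> = exp (\<iota> * complex_of_real (ln \<bar>x\<bar>)) / complex_of_real C"
    using assms by (simp add: exp_diff i)
  finally show ?thesis .
qed
theorem theorem4p3:
  fixes q :: real and \<sigma>1 \<tau> :: "real poly" and a1 b1 a2 b2 :: real and N :: nat
    and \<iota> :: complex
  defines "s1 \<equiv> poly (pderiv (pderiv \<sigma>1)) 0"
    and "\<sigma>2 \<equiv> smult q (\<sigma>1 + [:0, 1 - 1/q:] * \<tau>)"
  defines "s2 \<equiv> poly (pderiv (pderiv \<sigma>2)) 0"
    and "\<Lambda> \<equiv> (1/q)^2 * (1 + (1 - 1/q) * coeff \<tau> 1 / (s1 / 2))"
    and "a \<equiv> a2" and "b \<equiv> b1 / q"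
  defines "\<rho> \<equiv> (\<lambda>x::real. exp (\<iota> * complex_of_real (ln \<bar>x\<bar>)) *
              complex_of_real (qpoch_inf (q * a / x) q * qpoch_inf (x / b) q /
                               (qpoch_inf (a1 / x) q * qpoch_inf (x / b2) q)))"
  assumes q: "0 < q" "q < 1"
    and deg_\<sigma>1: "degree \<sigma>1 \<le> 2"
    and deg_\<tau>: "degree \<tau> \<le> 1" and tau1: "coeff \<tau> 1 \<noteq> 0"
    and \<sigma>1_fact: "\<sigma>1 = smult (s1 / 2) ([:-a1, 1:] * [:-b1, 1:])"
    and \<sigma>2_fact: "\<sigma>2 = smult (s2 / 2) ([:-a2, 1:] * [:-b2, 1:])"
    and s1: "s1 \<noteq> 0" and s2: "s2 \<noteq> 0"
    and zeros: "0 < a1" "a1 < a2" "a2 < b1" "b1 < b2"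
    and Lam: "0 < q^2 * \<Lambda>" "q^2 * \<Lambda> < 1"
    and N: "(1/q) ^ (N + 1) * a = b"
    and iota: "exp (\<iota> * complex_of_real (ln q)) = complex_of_real ((1/q)^3 * s2 * b2 / (s1 * b))"
  shows "\<exists>(P :: nat \<Rightarrow> real poly) (d2 :: nat \<Rightarrow> complex).
           (\<forall>n\<le>N. P n \<noteq> 0 \<and> degree (P n) = n \<and>
                   solves_qEHT q \<sigma>1 \<tau> (qEHT_lambda q \<sigma>1 \<tau> n) (poly (P n)) \<and> d2 n \<noteq> 0) \<and>
           (\<forall>m\<le>N. \<forall>n\<le>N.
              qinv_integral q a N (\<lambda>x. complex_of_real (poly (P n) x * poly (P m) x) * \<rho> x)
                = (if m = n then d2 n else 0))"
proof -
  have qn: "q \<noteq> 0" "q \<noteq> 1" using q by auto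
  define t0 where "t0 = coeff \<tau> 0"
  define t1 where "t1 = coeff \<tau> 1"
  have \<tau>_eq: "\<tau> = [:t0, t1:]"
  proof (rule poly_eqI)
    fix n show "coeff \<tau> n = coeff [:t0, t1:] n"
    proof (cases n)
      case 0 then show ?thesis by (simp add: t0_def)
    next
      case (Suc m) then show ?thesis
        using deg_\<tau> by (cases m) (auto simp: t1_def coeff_eq_0)
    qed
  qed
  have \<sigma>1_eq: "\<sigma>1 = [:s1/2*a1*b1, -(s1/2)*(a1+b1), s1/2:]"
    by (subst \<sigma>1_fact) (simp add: field_simps)
  define lam where "lam = qEHT_lambda q \<sigma>1 \<tau>"
  have lam_eq: "lam n = - qnum q (int n) * (t1 + s1/2 * qnum (1/q) (int n - 1))" for n
    unfolding lam_def qEHT_lambda_def s1_def[symmetric] t1_def by (simp add: algebra_simps)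
  define r where "r = q^2 * \<Lambda>"
  have r_eq: "r = 1 + (1 - 1/q)*t1/(s1/2)"
    using qn by (simp add: r_def \<Lambda>_def t1_def power_divide)
  define G where "G n = (1-q^n)*((1/q)^n*q - r)" for n
  define K where "K = - (s1/2) * q / (1-q)^2"
  have K0: "K \<noteq> 0" using s1 qn by (simp add: K_def)
  have lam_cl: "lam n = K * G n" for n
    using lam_closed[OF q _ r_eq, of n] s1 lam_eq[of n] by (simp add: K_def G_def)
  have r_pos: "0 < r" "r < 1" using Lam by (simp_all add: r_def)
  have smG: "strict_mono G" unfolding G_def by (rule G_mono[OF q r_pos])
  have lam_inj: "m = n" if "lam m = lam n" for m n
  proof -
    have "G m = G n" using that K0 by (simp add: lam_cl)
    then show ?thesis using smG strict_mono_eq by metis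
  qed
  have co: "coeff (Lop q \<sigma>1 \<tau> p) j = - lam j * coeff p j" if "\<And>i. i > j \<Longrightarrow> coeff p i = 0" for p j
  proof -
    have h: "coeff (Lop q \<sigma>1 \<tau> p) j = qnum q (int j) * (t1 + s1/2 * qnum (1/q) (int j - 1)) * coeff p j"
      using coeff_Lop[of j p q "s1/2*a1*b1" "-(s1/2)*(a1+b1)" "s1/2" t0 t1, OF that]
      unfolding \<sigma>1_eq[symmetric] \<tau>_eq[symmetric] .
    show ?thesis unfolding h lam_eq by simp
  qed
  have "\<exists>P. degree P = n \<and> coeff P n = 1 \<and> Lop q \<sigma>1 \<tau> P = smult (- lam n) P" for n
    by (rule eigen_exists[where T="Lop q \<sigma>1 \<tau>" and \<mu>="\<lambda>n. - lam n"])
       (use Lop_add Lop_smult co lam_inj in \<open>auto\<close>, metis less_irrefl lam_inj)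
  then obtain P where P: "\<And>n. degree (P n) = n \<and> coeff (P n) n = 1 \<and> Lop q \<sigma>1 \<tau> (P n) = smult (- lam n) (P n)"
    by metis
  have P0: "P n \<noteq> 0" for n using P[of n] by auto
  have sol: "solves_qEHT q \<sigma>1 \<tau> (lam n) (poly (P n))" for n
    by (rule solves_from_Lop[OF q]) (use P in auto)
  have a_pos: "0 < a" using zeros by (simp add: a_def)
  have b_eq: "q * b = b1" using qn by (simp add: b_def)
  have b_pos: "0 < b" using zeros q by (simp add: b_def)
  define xg where "xg k = (1/q)^k * a" for k
  have iq: "1 < 1/q" using q by simp
  have xg_pos: "0 < xg k" for k using a_pos q by (simp add: xg_def)
  have xg_ge: "a \<le> xg k" for k
    using a_pos iq by (simp add: xg_def one_le_power)
  have xN: "xg N = b1"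
  proof -
    have "(1/q) * xg N = b" using N by (simp add: xg_def mult.assoc)
    then show ?thesis using b_eq qn by (simp add: field_simps)
  qed
  have xg_le: "xg k \<le> b1" if "k \<le> N" for k
  proof -
    have "(1/q)^k \<le> (1/q)^N" using that iq by (simp add: power_increasing)
    then have "(1/q)^k * a \<le> (1/q)^N * a" using a_pos by (simp add: mult_right_mono)
    then show ?thesis using xN by (simp add: xg_def)
  qed
  have smx: "strict_mono xg"
    unfolding xg_def using iq a_pos by (intro strict_monoI) (simp add: power_strict_increasing)
  have xg_inj: "inj xg" using smx strict_mono_imp_inj_on by blast
  have xg_Suc: "xg (Suc k) = (1/q)^1 * xg k" "q * xg (Suc k) = xg k" "xg k / q = xg (Suc k)" for k
    using qn by (simp_all add: xg_def field_simps)
  have xg0: "xg 0 = a" by (simp add: xg_def)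
  define E where "E x = exp (\<iota> * complex_of_real (ln \<bar>x\<bar>))" for x
  define Q where "Q x = qpoch_inf (q*a/x) q * qpoch_inf (x/b) q / (qpoch_inf (a1/x) q * qpoch_inf (x/b2) q)" for x
  have \<rho>_eq: "\<rho> x = E x * complex_of_real (Q x)" for x by (simp add: \<rho>_def E_def Q_def)
  define Cr where "Cr = (1/q)^3 * s2 * b2 / (s1 * b)"
  have Cr0: "Cr \<noteq> 0" using qn s1 s2 b_pos zeros by (simp add: Cr_def)
  have iota': "exp (\<iota> * complex_of_real (ln q)) = complex_of_real Cr" using iota by (simp add: Cr_def)
  have E_st: "E (x/q) = E x / complex_of_real Cr" if "0 < x" for x
    unfolding E_def by (rule E_step[OF q(1) that iota'])
  have \<sigma>1_poly: "poly \<sigma>1 x = s1/2*(x-a1)*(x-b1)" for x by (subst \<sigma>1_fact) (simp add: field_simps)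
  have \<sigma>2_poly: "poly \<sigma>2 x = s2/2*(x-a2)*(x-b2)" for x by (subst \<sigma>2_fact) (simp add: field_simps)
  have \<sigma>2_poly': "poly \<sigma>2 x = q * (poly \<sigma>1 x + (1 - 1/q) * x * poly \<tau> x)" for x
    by (simp add: \<sigma>2_def)
  define w where "w k = complex_of_real ((1/q)^k) * \<rho> (xg k)" for k
  define Apr where "Apr k = q^2 * poly \<sigma>1 (xg k) / ((1-q)^2 * (xg k)^2)" for k
  define Amr where "Amr k = q * (poly \<sigma>1 (xg k) + (1 - 1/q) * xg k * poly \<tau> (xg k)) / ((1-q)^2 * (xg k)^2)" for k
  have Am0: "Amr 0 = 0"
  proof -
    have "poly \<sigma>2 a = 0" by (simp add: \<sigma>2_poly a_def)
    then show ?thesis unfolding Amr_def xg0 \<sigma>2_poly'[symmetric] by simp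
  qed
  have ApN: "Apr N = 0" unfolding Apr_def xN \<sigma>1_poly by simp
  have Wrel: "w k * complex_of_real (Apr k) = w (Suc k) * complex_of_real (Amr (Suc k))" if "k < N" for k
  proof -
    define x where "x = xg k"
    have x': "xg (Suc k) = x / q" using xg_Suc(3) by (simp add: x_def)
    have xpos: "0 < x" using xg_pos by (simp add: x_def)
    have xa1: "a1 < x" using xg_ge[of k] zeros by (simp add: x_def a_def)
    have "x / q \<le> b1" using xg_le[of "Suc k"] that x' by simp
    then have "x / q < b2" using zeros by simp
    then have xb2: "x < q * b2" using q by (simp add: field_simps)
    have R: "Q x * ((s1/2)*(x-a1)*(x-q*b)) = (1/q) * Q (x/q) * ((s2/2)*(x/q-a)*(x/q-b2)) / Cr"
      unfolding Q_def Cr_def by (rule R1[OF q xpos xa1 xb2 _ b_pos _ s1 s2]) (use zeros in auto)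
    have R': "Q x * poly \<sigma>1 x = (1/q) * Q (x/q) * poly \<sigma>2 (x/q) / Cr"
      using R b_eq by (simp add: \<sigma>1_poly \<sigma>2_poly a_def mult_ac)
    have Am': "Amr (Suc k) = poly \<sigma>2 (x/q) / ((1-q)^2 * (x/q)^2)"
      by (simp add: Amr_def x' \<sigma>2_poly')
    have Ap': "Apr k = q^2 * poly \<sigma>1 x / ((1-q)^2 * x^2)" by (simp add: Apr_def x_def)
    have real: "(1/q)^k * Q x * Apr k = (1/q)^k * (1/q) / Cr * Q (x/q) * Amr (Suc k)"
      unfolding Am' Ap' by (rule W_real) (use qn Cr0 xpos R' in auto)
    have "w k * complex_of_real (Apr k) = E x * complex_of_real ((1/q)^k * Q x * Apr k)"
      by (simp add: w_def \<rho>_eq x_def)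
    also have "\<dots> = E x * complex_of_real ((1/q)^k * (1/q) / Cr * Q (x/q) * Amr (Suc k))"
      by (simp only: real)
    also have "\<dots> = w (Suc k) * complex_of_real (Amr (Suc k))"
      using Cr0 by (simp add: w_def \<rho>_eq x' E_st[OF xpos] field_simps)
    finally show ?thesis .
  qed
  define ip where "ip f g = (\<Sum>k\<le>N. w k * complex_of_real (f (xg k) * g (xg k)))" for f g :: "real \<Rightarrow> real"
  define S where "S f g = - (\<Sum>k<N. w k * complex_of_real (Apr k) * complex_of_real (f (xg (Suc k)) - f (xg k))
                              * complex_of_real (g (xg (Suc k)) - g (xg k)))" for f g :: "real \<Rightarrow> real"
  have Lrep: "poly \<sigma>1 (xg k) * qD (1/q) (qD q y) (xg k) + poly \<tau> (xg k) * qD q y (xg k)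
      = Apr k * (y (xg (Suc k)) - y (xg k)) + Amr k * ((if k = 0 then y (q * a) else y (xg (k - 1))) - y (xg k))"
    for y k
  proof -
    have "q * xg k = (if k = 0 then q * a else xg (k - 1))"
      by (cases k) (simp_all add: xg0 xg_Suc(2))
    then show ?thesis
      using L_pointwise[OF q, of "xg k" "poly \<sigma>1 (xg k)" y "poly \<tau> (xg k)"] xg_pos[of k]
      by (simp add: Apr_def Amr_def xg_Suc(3))
  qed
  have symm: "complex_of_real (- l) * ip y g = S y g"
    if sy: "solves_qEHT q \<sigma>1 \<tau> l y" for y g l
  proof -
    have e: "- l * y (xg k) = Apr k * (y (xg (Suc k)) - y (xg k)) + Amr k * ((if k = 0 then y (q * a) else y (xg (k - 1))) - y (xg k))" for k
      using sy Lrep[where y=y and k=k] unfolding solves_qEHT_def by (metis add_eq_0_iff2 mult_minus_left)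
    have "complex_of_real (- l) * ip y g
        = (\<Sum>k\<le>N. w k * ((complex_of_real (Apr k) * (complex_of_real (y (xg (Suc k))) - complex_of_real (y (xg k)))
             + complex_of_real (Amr k) * ((if k = 0 then complex_of_real (y (q * a)) else complex_of_real (y (xg (k - 1)))) - complex_of_real (y (xg k))))
             * complex_of_real (g (xg k))))"
      unfolding ip_def sum_distrib_left
    proof (rule sum.cong[OF refl])
      fix k
      have "complex_of_real (- l * y (xg k)) = complex_of_real (Apr k * (y (xg (Suc k)) - y (xg k)) + Amr k * ((if k = 0 then y (q * a) else y (xg (k - 1))) - y (xg k)))"
        using e[of k] by simp
      then show "complex_of_real (- l) * (w k * complex_of_real (y (xg k) * g (xg k))) =
         w k * ((complex_of_real (Apr k) * (complex_of_real (y (xg (Suc k))) - complex_of_real (y (xg k)))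
             + complex_of_real (Amr k) * ((if k = 0 then complex_of_real (y (q * a)) else complex_of_real (y (xg (k - 1)))) - complex_of_real (y (xg k))))
             * complex_of_real (g (xg k)))"
        by (cases "k = 0") (simp_all add: algebra_simps)
    qed
    also have "\<dots> = - (\<Sum>k<N. w k * complex_of_real (Apr k) * (complex_of_real (y (xg (Suc k))) - complex_of_real (y (xg k)))
                              * (complex_of_real (g (xg (Suc k))) - complex_of_real (g (xg k))))"
      by (rule sum_by_parts_sym[where Ap="\<lambda>k. complex_of_real (Apr k)" and Am="\<lambda>k. complex_of_real (Amr k)"
            and F="\<lambda>k. complex_of_real (y (xg k))" and G="\<lambda>k. complex_of_real (g (xg k))"])
         (use Am0 ApN Wrel in auto)
    also have "\<dots> = S y g" by (simp add: S_def)
    finally show ?thesis .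
  qed
  have S_sym: "S f g = S g f" for f g by (simp add: S_def mult_ac)
  have ip_sym: "ip f g = ip g f" for f g by (simp add: ip_def mult_ac)
  have orth: "ip (poly (P n)) (poly (P m)) = 0" if "m \<noteq> n" for m n
  proof -
    have "complex_of_real (- lam n) * ip (poly (P n)) (poly (P m)) = complex_of_real (- lam m) * ip (poly (P n)) (poly (P m))"
      using symm[OF sol[of n], of "poly (P m)"] symm[OF sol[of m], of "poly (P n)"] S_sym ip_sym by metis
    then have "complex_of_real (lam m - lam n) * ip (poly (P n)) (poly (P m)) = 0"
      by (simp add: algebra_simps) (metis)
    moreover have "lam m \<noteq> lam n" using lam_inj that by blast
    ultimately show ?thesis by simp
  qed
  have w_nz: "w j \<noteq> 0" if "j \<le> N" for j
  proof -
    define x where "x = xg j"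
    have xp: "0 < x" using xg_pos by (simp add: x_def)
    have xa: "a \<le> x" using xg_ge by (simp add: x_def)
    have xb: "x \<le> b1" using xg_le[OF that] by (simp add: x_def)
    have "a / x \<le> 1" using xa xp by simp
    then have "q * (a / x) \<le> q * 1" using q by (intro mult_left_mono) auto
    then have "q * a / x < 1" using q by simp
    then have f1: "qpoch_inf (q*a/x) q \<noteq> 0" by (rule qpoch_pos[OF q])
    have "q * b < 1 * b" using q b_pos by (intro mult_strict_right_mono) auto
    then have "x < b" using xb b_eq by linarith
    then have "x / b < 1" using b_pos by simp
    then have f2: "qpoch_inf (x/b) q \<noteq> 0" by (rule qpoch_pos[OF q])
    have "a1 < x" using xa zeros by (simp add: a_def)
    then have "a1 / x < 1" using xp by simp
    then have f3: "qpoch_inf (a1/x) q \<noteq> 0" by (rule qpoch_pos[OF q])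
    have "x < b2" using xb zeros by simp
    then have "x / b2 < 1" using zeros by simp
    then have f4: "qpoch_inf (x/b2) q \<noteq> 0" by (rule qpoch_pos[OF q])
    have Qn: "Q x \<noteq> 0" using f1 f2 f3 f4 unfolding Q_def by simp
    have "w j = complex_of_real ((1/q)^j) * (E x * complex_of_real (Q x))"
      unfolding w_def \<rho>_eq x_def ..
    moreover have "E x \<noteq> 0" unfolding E_def by simp
    moreover have "complex_of_real ((1/q)^j) \<noteq> 0" using q by simp
    ultimately show ?thesis using Qn by simp
  qed
  have ipint: "qinv_integral q a N (\<lambda>x. complex_of_real (poly (P n) x * poly (P m) x) * \<rho> x)
      = complex_of_real ((1/q - 1) * a) * ip (poly (P n)) (poly (P m))" for n m
    by (simp add: qinv_integral_def ip_def w_def xg_def atLeast0AtMost mult_ac)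
  have c0: "complex_of_real ((1/q-1)*a) \<noteq> 0" using q a_pos by simp
  have nd: "ip (poly (P n)) (poly (P n)) \<noteq> 0" if nN: "n \<le> N" for n
  proof
    assume z: "ip (poly (P n)) (poly (P n)) = 0"
    define ipn where "ipn g = ip (poly (P n)) (poly g)" for g
    have add: "ipn (g + h) = ipn g + ipn h" for g h
      by (simp add: ipn_def ip_def sum.distrib[symmetric] algebra_simps)
    have sm: "ipn (smult c g) = complex_of_real c * ipn g" for c g
      by (simp add: ipn_def ip_def sum_distrib_left algebra_simps)
    have zm: "ipn (P m) = 0" if "m \<le> N" for m
      using z orth[of m n] by (cases "m = n") (auto simp: ipn_def)
    have all: "ipn g = 0" if "degree g \<le> N" for g
      by (rule span_zero[of ipn N P, OF add sm _ zm _ that]) (use P P0 in auto)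
    have root: "poly (P n) (xg j) = 0" if jN: "j \<le> N" for j
    proof -
      define gj where "gj = (\<Prod>i\<in>{..N}-{j}. [:-xg i, 1:])"
      have "degree gj \<le> (\<Sum>i\<in>{..N}-{j}. degree [:-xg i, 1:])"
        unfolding gj_def by (rule order_trans[OF degree_prod_sum_le]) auto
      also have "\<dots> = N" using jN by simp
      finally have dg: "degree gj \<le> N" .
      have gk: "poly gj (xg k) = 0" if "k \<in> {..N} - {j}" for k
        unfolding gj_def poly_prod using that by (intro prod_zero) auto
      have gjj: "poly gj (xg j) \<noteq> 0"
        unfolding gj_def poly_prod using xg_inj by (auto simp: inj_eq)
      have "ipn gj = w j * complex_of_real (poly (P n) (xg j) * poly gj (xg j))
                     + (\<Sum>k\<in>{..N}-{j}. w k * complex_of_real (poly (P n) (xg k) * poly gj (xg k)))"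
        unfolding ipn_def ip_def using jN by (subst sum.remove[of _ j]) auto
      also have "(\<Sum>k\<in>{..N}-{j}. w k * complex_of_real (poly (P n) (xg k) * poly gj (xg k))) = 0"
        using gk by (intro sum.neutral) auto
      finally have "w j * complex_of_real (poly (P n) (xg j) * poly gj (xg j)) = 0"
        using all[OF dg] by simp
      then show ?thesis using w_nz[OF jN] gjj by simp
    qed
    have "P n = 0"
    proof (rule poly_eqI_degree[of "xg ` {..N}"])
      show "poly (P n) x = poly 0 x" if "x \<in> xg ` {..N}" for x using that root by auto
      have "card (xg ` {..N}) = Suc N" using xg_inj by (simp add: card_image inj_on_subset)
      then show "degree (P n) < card (xg ` {..N})" "degree 0 < card (xg ` {..N})"
        using P[of n] nN by auto
    qed
    then show False using P0 by blast
  qed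
  define d2 where "d2 n = complex_of_real ((1/q-1)*a) * ip (poly (P n)) (poly (P n))" for n
  show ?thesis
  proof (intro exI[of _ P] exI[of _ d2] conjI allI impI)
    fix n assume "n \<le> N"
    show "P n \<noteq> 0" by (rule P0)
    show "degree (P n) = n" using P by blast
    show "solves_qEHT q \<sigma>1 \<tau> (qEHT_lambda q \<sigma>1 \<tau> n) (poly (P n))" using sol by (simp add: lam_def)
    show "d2 n \<noteq> 0" using nd[OF \<open>n \<le> N\<close>] c0 by (simp add: d2_def)
  next
    fix m n assume "m \<le> N" "n \<le> N"
    show "qinv_integral q a N (\<lambda>x. complex_of_real (poly (P n) x * poly (P m) x) * \<rho> x)
          = (if m = n then d2 n else 0)"
      unfolding ipint d2_def using orth[of m n] by simp
  qed
qed

end
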